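(* Consider two bosonic modes with quadratures $(\hat q_1,\hat p_1,\hat q_2,\hat p_2)$, subsystem $A$ = mode 1, $B$ = mode 2, and the Hamiltonian $\hat H=\frac12(\hat p_1\hat q_2+\hat q_2\hat p_1)$, whose symplectic evolution is $$M(t)=\begin{pmatrix}1&0&t&0\\0&1&0&0\\0&0&1&0\\0&-t&0&1\end{pmatrix}.$$ Then for every $t\ge0$, $$\inf_{\sigma\ \mathrm{Gaussian}}\Big(I(A;B)(\sigma)+I(A;B)(\mathcal U_{M(t)}(\sigma))\Big)\ \le\ 2\ln\frac e2,$$ the infimum being over all Gaussian states $\sigma$ of $AB$.
   Context: Quadratures satisfy $[\hat\xi^a,\hat\xi^b]=i\Omega_4^{ab}$ with $\Omega_4=\bigoplus_{i=1}^2\begin{pmatrix}0&1\\-1&0\end{pmatrix}$. Gaussian states are those fully characterized by displacement and covariance matrix $G^{ab}=\mathrm{Tr}[\hat\xi^a\sigma\hat\xi^b+\hat\xi^b\sigma\hat\xi^a]-2z^az^b$. $\mathcal U_M(\sigma)=U_M\sigma U_M^\dagger$ with $U_M^\dagger\hat\xi^aU_M=\sum_bM^a{}_b\hat\xi^b$, so the covariance matrix transforms as $G\mapsto MGM^\intercal$. $I(A;B)=S(A)+S(B)-S(AB)$ with von Neumann entropies. *)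

theory Defs
  imports Complex_Main "HOL-Library.Extended_Real" "Jordan_Normal_Form.Matrix"
begin

text \<open>Symplectic form Omega_n = direct sum of n blocks ((0,1),(-1,0)), quadrature
 ordering (q_1,p_1,...,q_n,p_n), indices starting at 0.\<close>
definition Omega :: "nat \<Rightarrow> real mat" where
  "Omega n = mat (2*n) (2*n) (\<lambda>(i,j).
     if even i \<and> j = i + 1 then 1 else if odd i \<and> i = j + 1 then -1 else 0)"

text \<open>Covariance matrices of (Gaussian) quantum states of n modes:
 real symmetric G with G + i Omega positive semidefinite (uncertainty principle).\<close>
definition quantum_cov :: "nat \<Rightarrow> real mat \<Rightarrow> bool" where
  "quantum_cov n G \<longleftrightarrow> G \<in> carrier_mat (2*n) (2*n) \<and> transpose_mat G = G \<and>
     (\<forall>v \<in> carrier_vec (2*n).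
        let H = map_mat complex_of_real G + \<i> \<cdot>\<^sub>m map_mat complex_of_real (Omega n)
        in Im ((H *\<^sub>v v) \<bullet>c v) = 0 \<and> 0 \<le> Re ((H *\<^sub>v v) \<bullet>c v))"

definition symplectic_mat :: "nat \<Rightarrow> real mat \<Rightarrow> bool" where
  "symplectic_mat n S \<longleftrightarrow> S \<in> carrier_mat (2*n) (2*n) \<and>
     S * Omega n * transpose_mat S = Omega n"

definition williamson_diag :: "nat \<Rightarrow> (nat \<Rightarrow> real) \<Rightarrow> real mat" where
  "williamson_diag n \<nu> = mat (2*n) (2*n) (\<lambda>(i,j). if i = j then \<nu> (i div 2) else 0)"

definition symp_eigs :: "nat \<Rightarrow> real mat \<Rightarrow> nat \<Rightarrow> real" where
  "symp_eigs n G = (SOME \<nu>. (\<forall>k<n. 0 < \<nu> k) \<and>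
     (\<exists>S. symplectic_mat n S \<and> S * G * transpose_mat S = williamson_diag n \<nu>))"

text \<open>Von Neumann entropy (natural log) of a mode with symplectic eigenvalue nu
 (vacuum covariance = identity). Note 0 * ln 0 = 0 holds trivially.\<close>
definition hfun :: "real \<Rightarrow> real" where
  "hfun \<nu> = ((\<nu> + 1) / 2) * ln ((\<nu> + 1) / 2) - ((\<nu> - 1) / 2) * ln ((\<nu> - 1) / 2)"

definition gauss_entropy :: "nat \<Rightarrow> real mat \<Rightarrow> real" where
  "gauss_entropy n G = (\<Sum>k<n. hfun (symp_eigs n G k))"

definition cov_A :: "real mat \<Rightarrow> real mat" where
  "cov_A G = mat 2 2 (\<lambda>(i,j). G $$ (i,j))"
definition cov_B :: "real mat \<Rightarrow> real mat" where
  "cov_B G = mat 2 2 (\<lambda>(i,j). G $$ (i+2,j+2))"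

definition mutual_info :: "real mat \<Rightarrow> real" where
  "mutual_info G = gauss_entropy 1 (cov_A G) + gauss_entropy 1 (cov_B G) - gauss_entropy 2 G"

definition Mt :: "real \<Rightarrow> real mat" where
  "Mt t = mat 4 4 (\<lambda>(i,j).
     if i = j then 1 else if (i,j) = (0,2) then t else if (i,j) = (3,1) then -t else 0)"

end

theory Submission
  imports Defs
begin

lemma sum4: "(\<Sum>i\<in>{0..<4::nat}. f i) = f 0 + f 1 + f 2 + f 3"
  by (simp add: numeral_eq_Suc atLeast0LessThan lessThan_Suc add_ac)
lemma sum2: "(\<Sum>i\<in>{0..<2::nat}. f i) = f 0 + f 1"
  by (simp add: numeral_eq_Suc atLeast0LessThan lessThan_Suc add_ac)
lemma less4: "(i::nat) < 4 \<longleftrightarrow> i = 0 \<or> i = 1 \<or> i = 2 \<or> i = 3" by auto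
lemma less2: "(i::nat) < 2 \<longleftrightarrow> i = 0 \<or> i = 1" by auto

lemma psd_ident:
  fixes G S :: "real mat"
  assumes G: "G \<in> carrier_mat 4 4" and S: "S \<in> carrier_mat 4 4" and a: "a < 4" and b: "b < 4"
  defines "v \<equiv> vec 4 (\<lambda>j. Complex (S$$(a,j)) (S$$(b,j)))"
  shows "Re (((map_mat complex_of_real G + \<i> \<cdot>\<^sub>m map_mat complex_of_real (Omega 2)) *\<^sub>v v) \<bullet>c v)
     = (S*G*transpose_mat S)$$(a,a) + (S*G*transpose_mat S)$$(b,b)
       - (S*Omega 2*transpose_mat S)$$(a,b) + (S*Omega 2*transpose_mat S)$$(b,a)"
  using G S a b unfolding v_def
  apply (simp add: scalar_prod_def sum4 Omega_def)
  apply (simp add: algebra_simps)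
  done
lemma nu_ge1:
  assumes Q: "quantum_cov 2 G" and S: "S \<in> carrier_mat 4 4"
    and So: "S * Omega 2 * transpose_mat S = Omega 2"
    and SG: "S * G * transpose_mat S = williamson_diag 2 \<nu>" and k: "k < 2"
  shows "1 \<le> \<nu> k"
proof -
  have G: "G \<in> carrier_mat 4 4" using Q unfolding quantum_cov_def by simp
  define v where "v = vec 4 (\<lambda>j. Complex (S$$(2*k,j)) (S$$(2*k+1,j)))"
  have "v \<in> carrier_vec (2*2)" unfolding v_def by simp
  with Q have "0 \<le> Re (((map_mat complex_of_real G + \<i> \<cdot>\<^sub>m map_mat complex_of_real (Omega 2)) *\<^sub>v v) \<bullet>c v)"
    unfolding quantum_cov_def Let_def by blast
  also have "\<dots> = (S*G*transpose_mat S)$$(2*k,2*k) + (S*G*transpose_mat S)$$(2*k+1,2*k+1)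
       - (S*Omega 2*transpose_mat S)$$(2*k,2*k+1) + (S*Omega 2*transpose_mat S)$$(2*k+1,2*k)"
    unfolding v_def using G S k by (intro psd_ident) auto
  also have "\<dots> = 2 * \<nu> k - 2"
    unfolding SG So using k by (simp add: williamson_diag_def Omega_def)
  finally show ?thesis by simp
qed
lemma one_mode:
  assumes X: "X \<in> carrier_mat 2 2" and X01: "X$$(0,1)=0" and X10: "X$$(1,0)=0"
    and X00: "X$$(0,0)=p" and X11: "X$$(1,1)=q" and p: "0<p" and q: "0<q"
  shows "symp_eigs 1 X 0 = sqrt (p*q)"
proof -
  define P where "P = (\<lambda>\<nu>. (\<forall>k<1. 0 < \<nu> k) \<and>
     (\<exists>S. symplectic_mat 1 S \<and> S * X * transpose_mat S = williamson_diag 1 \<nu>))"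
  define r where "r = sqrt (p*q)"
  have r: "0 < r" "r*r = p*q" using p q unfolding r_def by (auto simp: real_sqrt_mult_self)
  define \<alpha> where "\<alpha> = sqrt (r/p)"
  have al: "0 < \<alpha>" "\<alpha>*\<alpha> = r/p" using p r unfolding \<alpha>_def by auto
  define S where "S = mat 2 2 (\<lambda>(i,j). if i=j then (if i=0 then \<alpha> else 1/\<alpha>) else 0)"
  have "P (\<lambda>_. r)"
    unfolding P_def
  proof (intro conjI exI)
    show "\<forall>k<1. 0 < r" using r by auto
    show "symplectic_mat 1 S" unfolding symplectic_mat_def
      by (auto simp: S_def Omega_def scalar_prod_def sum2 less2 intro!: eq_matI) (use al in auto)
    have e1: "\<alpha> * \<alpha> * p = r" using al p by (simp add: field_simps)
    have "q / (\<alpha> * \<alpha>) = q*p/r" unfolding al(2) by simp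
    also have "\<dots> = r" using r by (simp add: field_simps)
    finally have e2: "q / (\<alpha> * \<alpha>) = r" .
    show "S * X * transpose_mat S = williamson_diag 1 (\<lambda>_. r)"
      using X X01 X10 X00 X11 e1 e2
      by (auto simp: S_def williamson_diag_def scalar_prod_def sum2 less2 intro!: eq_matI)
  qed
  hence P: "P (symp_eigs 1 X)" unfolding symp_eigs_def P_def[symmetric] by (rule someI[where P=P])
  then obtain S where pos: "0 < symp_eigs 1 X 0" and Ss: "symplectic_mat 1 S"
     and SX: "S * X * transpose_mat S = williamson_diag 1 (symp_eigs 1 X)" unfolding P_def by auto
  define \<nu> where "\<nu> = symp_eigs 1 X 0"
  have Sc: "S \<in> carrier_mat 2 2" and SO: "S * Omega 1 * transpose_mat S = Omega 1"
    using Ss unfolding symplectic_mat_def by auto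
  have d: "S$$(0,0)*S$$(1,1) - S$$(0,1)*S$$(1,0) = 1"
    using arg_cong[OF SO, of "\<lambda>M. M$$(0,1)"] Sc
    by (simp add: Omega_def scalar_prod_def sum2)
  have w00: "S$$(0,0)*S$$(0,0)*p + S$$(0,1)*S$$(0,1)*q = \<nu>"
    using arg_cong[OF SX, of "\<lambda>M. M$$(0,0)"] Sc X X01 X10 X00 X11
    by (simp add: williamson_diag_def scalar_prod_def sum2 \<nu>_def) (simp add: algebra_simps)
  have w11: "S$$(1,0)*S$$(1,0)*p + S$$(1,1)*S$$(1,1)*q = \<nu>"
    using arg_cong[OF SX, of "\<lambda>M. M$$(1,1)"] Sc X X01 X10 X00 X11
    by (simp add: williamson_diag_def scalar_prod_def sum2 \<nu>_def) (simp add: algebra_simps)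
  have w01: "S$$(0,0)*S$$(1,0)*p + S$$(0,1)*S$$(1,1)*q = 0"
    using arg_cong[OF SX, of "\<lambda>M. M$$(0,1)"] Sc X X01 X10 X00 X11
    by (simp add: williamson_diag_def scalar_prod_def sum2 \<nu>_def) (simp add: algebra_simps)
  have key: "(a*a*p+b*b*q)*(c*c*p+d*d*q) - (a*c*p+b*d*q)^2 = p*q*(a*d-b*c)^2" for a b c d :: real
    by (simp add: power2_eq_square algebra_simps)
  have "\<nu>*\<nu> = p*q*(S$$(0,0)*S$$(1,1) - S$$(0,1)*S$$(1,0))^2"
    using key[of "S$$(0,0)" "S$$(0,1)" "S$$(1,0)" "S$$(1,1)"] w00 w11 w01 by simp
  with d have "\<nu>*\<nu> = p*q" by simp
  hence "sqrt (p*q) = sqrt (\<nu>*\<nu>)" by simp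
  also have "\<dots> = \<nu>" using pos \<nu>_def by simp
  finally show ?thesis unfolding \<nu>_def by simp
qed
definition G0 :: "real \<Rightarrow> real \<Rightarrow> real mat" where
  "G0 a e = mat 4 4 (\<lambda>(i,j). if i = j then (if i = 0 \<or> i = 3 then a else e) else 0)"

lemma qf:
  fixes z w :: complex and a e :: real
  assumes ae: "a*e = 1" and e: "0 < e"
  defines "Q \<equiv> (complex_of_real a * z + \<i> * w) * cnj z + (complex_of_real e * w - \<i> * z) * cnj w"
  shows "Im Q = 0" "0 \<le> Re Q"
proof -
  show "Im Q = 0" unfolding Q_def by (simp add: algebra_simps)
  have h: "Re Q = a*((Re z)^2 + (Im z)^2) + e*((Re w)^2+(Im w)^2) + 2*(Im z * Re w - Re z * Im w)"
    unfolding Q_def by (simp add: algebra_simps power2_eq_square)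
  have "e * Re Q = (a*e)*((Re z)^2 + (Im z)^2) + e*e*((Re w)^2+(Im w)^2) + 2*e*(Im z * Re w - Re z * Im w)"
    unfolding h by (simp add: algebra_simps)
  also have "\<dots> = (Re z - e*Im w)^2 + (Im z + e*Re w)^2"
    unfolding ae by (simp add: algebra_simps power2_eq_square)
  finally have "e * Re Q = (Re z - e*Im w)^2 + (Im z + e*Re w)^2" .
  hence "0 \<le> e * Re Q" by simp
  thus "0 \<le> Re Q" using e by (simp add: zero_le_mult_iff)
qed

lemma G0_cov:
  assumes ae: "a*e = 1" and e: "0 < e"
  shows "quantum_cov 2 (G0 a e)"
proof -
  have a: "0 < a" proof -
    have "0 < a*e" using ae by simp
    thus ?thesis using e by (auto simp: zero_less_mult_iff)
  qed
  have ea: "e*a = 1" using ae by (simp add: mult.commute)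
  show ?thesis
  unfolding quantum_cov_def Let_def
  proof (intro conjI ballI)
    show "G0 a e \<in> carrier_mat (2*2) (2*2)" by (simp add: G0_def)
    show "transpose_mat (G0 a e) = G0 a e" by (auto simp: G0_def intro!: eq_matI)
    fix v :: "complex vec" assume v: "v \<in> carrier_vec (2*2)"
    have eq: "((map_mat complex_of_real (G0 a e) + \<i> \<cdot>\<^sub>m map_mat complex_of_real (Omega 2)) *\<^sub>v v) \<bullet>c v
      = ((complex_of_real a * v$0 + \<i> * v$1) * cnj (v$0) + (complex_of_real e * v$1 - \<i> * v$0) * cnj (v$1))
      + ((complex_of_real e * v$2 + \<i> * v$3) * cnj (v$2) + (complex_of_real a * v$3 - \<i> * v$2) * cnj (v$3))"
      using v by (simp add: scalar_prod_def sum4 Omega_def G0_def)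
    show "Im (((map_mat complex_of_real (G0 a e) + \<i> \<cdot>\<^sub>m map_mat complex_of_real (Omega 2)) *\<^sub>v v) \<bullet>c v) = 0"
      unfolding eq using qf(1)[OF ae e, of "v$0" "v$1"] qf(1)[OF ea a, of "v$2" "v$3"] by simp
    show "0 \<le> Re (((map_mat complex_of_real (G0 a e) + \<i> \<cdot>\<^sub>m map_mat complex_of_real (Omega 2)) *\<^sub>v v) \<bullet>c v)"
      unfolding eq using qf(2)[OF ae e, of "v$0" "v$1"] qf(2)[OF ea a, of "v$2" "v$3"] by simp
  qed
qed
lemma hfun_one: "hfun 1 = 0" by (simp add: hfun_def)

lemma hfun_nonneg:
  assumes "1 \<le> \<nu>" shows "0 \<le> hfun \<nu>"
proof -
  define y where "y = (\<nu>-1)/2"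
  have y: "0 \<le> y" using assms by (simp add: y_def)
  have x: "(\<nu>+1)/2 = y + 1" by (simp add: y_def field_simps)
  have "y * ln y \<le> (y+1) * ln (y+1)"
  proof (cases "y \<le> 1")
    case True
    have "y * ln y \<le> 0"
    proof (cases "y = 0")
      case False
      with y True have "ln y \<le> 0" by simp
      thus ?thesis using y by (simp add: mult_nonneg_nonpos)
    qed simp
    moreover have "0 \<le> (y+1) * ln (y+1)" using y by simp
    ultimately show ?thesis by linarith
  next
    case False
    hence "ln y \<le> ln (y+1)" "0 \<le> ln y" by auto
    thus ?thesis using y by (intro mult_mono) auto
  qed
  thus ?thesis unfolding hfun_def x y_def[symmetric] by simp
qed

lemma ln2_le: "ln (2::real) \<le> 9/10"
proof -
  have "sqrt 2 \<le> (29/20::real)" by (rule real_le_lsqrt) (auto simp: power2_eq_square)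
  have "ln (sqrt 2) \<le> sqrt 2 - 1" by (rule ln_le_minus_one) simp
  moreover have "ln (sqrt 2) = ln 2 / (2::real)" by (simp add: ln_sqrt)
  ultimately show ?thesis using \<open>sqrt 2 \<le> 29/20\<close> by linarith
qed

lemma ylny:
  assumes "0 \<le> y" shows "- (y * ln y) \<le> 2 * sqrt y"
proof (cases "y = 0")
  case False
  hence y: "0 < y" using assms by simp
  have "ln (1 / sqrt y) \<le> 1 / sqrt y - 1" by (rule ln_le_minus_one) (use y in simp)
  moreover have "ln (1 / sqrt y) = - ln y / 2" using y by (simp add: ln_div ln_sqrt)
  ultimately have "- ln y \<le> 2 / sqrt y" by (simp add: field_simps)
  hence "y * (- ln y) \<le> y * (2 / sqrt y)" using y by (intro mult_left_mono) auto
  also have "y * (2 / sqrt y) = 2 * sqrt y" using y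
    by (simp add: field_simps)
  finally show ?thesis by simp
qed simp

lemma hfun_small:
  assumes n: "1 \<le> \<nu>" and c: "\<nu>*\<nu> = 1 + c" "c \<le> 1/400"
  shows "hfun \<nu> \<le> 1/10"
proof -
  define x where "x = (\<nu>+1)/2"
  define y where "y = (\<nu>-1)/2"
  have x1: "1 \<le> x" using n by (simp add: x_def)
  have y0: "0 \<le> y" using n by (simp add: y_def)
  have "x * ln x \<le> x * (x - 1)" using x1 by (intro mult_left_mono ln_le_minus_one) auto
  also have "x * (x-1) = c/4" unfolding x_def using c by (simp add: field_simps)
  finally have A: "x * ln x \<le> c/4" .
  have sq: "0 \<le> (\<nu>-1)*(\<nu>-1)" by simp
  have "y * 4 \<le> c" unfolding y_def using sq c(1) by (simp add: algebra_simps)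
  hence "y \<le> 1/1600" using c by simp
  hence "sqrt y \<le> sqrt (1/1600)" by simp
  also have "sqrt (1/1600) = (1/40::real)" by (simp add: real_sqrt_divide)
  finally have "- (y * ln y) \<le> 1/20" using ylny[OF y0] by simp
  with A c show ?thesis unfolding hfun_def x_def[symmetric] y_def[symmetric] by simp
qed
definition G1 :: "real \<Rightarrow> real \<Rightarrow> real \<Rightarrow> real mat" where
  "G1 t a e = mat 4 4 (\<lambda>(i,j).
     if (i,j) = (0,0) \<or> (i,j) = (3,3) then a + t*t*e
     else if (i,j) = (1,1) \<or> (i,j) = (2,2) then e
     else if (i,j) = (0,2) \<or> (i,j) = (2,0) then t*e
     else if (i,j) = (1,3) \<or> (i,j) = (3,1) then -t*e else 0)"

lemma Mt_G0: "Mt t * G0 a e * transpose_mat (Mt t) = G1 t a e"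
  by (auto simp: Mt_def G0_def G1_def scalar_prod_def sum4 less4 intro!: eq_matI)

lemma Mt_Omega: "Mt t * Omega 2 * transpose_mat (Mt t) = Omega 2"
  by (auto simp: Mt_def Omega_def scalar_prod_def sum4 less4 intro!: eq_matI)

lemma Mt_carrier: "Mt t \<in> carrier_mat 4 4" by (simp add: Mt_def)

lemma conj_assoc:
  fixes A B C :: "real mat"
  assumes "A \<in> carrier_mat 4 4" "B \<in> carrier_mat 4 4" "C \<in> carrier_mat 4 4"
  shows "(A*B)*C*transpose_mat (A*B) = A*(B*C*transpose_mat B)*transpose_mat A"
proof -
  have "transpose_mat (A*B) = transpose_mat B * transpose_mat A"
    using assms by (intro transpose_mult) auto
  thus ?thesis using assms by (simp add: assoc_mult_mat[of _ 4 4 _ 4 _ 4])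
qed
lemma symp2_ge1:
  assumes Q: "quantum_cov 2 H" and T: "T \<in> carrier_mat 4 4"
    and TO: "T * Omega 2 * transpose_mat T = Omega 2" and G: "G = T*H*transpose_mat T"
    and ex: "\<exists>\<nu>. (\<forall>k<2. 0 < \<nu> k) \<and> (\<exists>S. symplectic_mat 2 S \<and> S * G * transpose_mat S = williamson_diag 2 \<nu>)"
    and k: "k < 2"
  shows "1 \<le> symp_eigs 2 G k"
proof -
  have "(\<forall>k<2. 0 < symp_eigs 2 G k) \<and> (\<exists>S. symplectic_mat 2 S \<and> S * G * transpose_mat S = williamson_diag 2 (symp_eigs 2 G))"
    unfolding symp_eigs_def by (rule someI_ex[OF ex])
  then obtain S where S: "symplectic_mat 2 S" and SG: "S * G * transpose_mat S = williamson_diag 2 (symp_eigs 2 G)"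
    by blast
  have Sc: "S \<in> carrier_mat 4 4" and SO: "S * Omega 2 * transpose_mat S = Omega 2"
    using S unfolding symplectic_mat_def by auto
  have H: "H \<in> carrier_mat 4 4" using Q unfolding quantum_cov_def by simp
  have Oc: "Omega 2 \<in> carrier_mat 4 4" by (simp add: Omega_def)
  show ?thesis
  proof (rule nu_ge1[OF Q _ _ _ k])
    show "S*T \<in> carrier_mat 4 4" using Sc T by simp
    show "S * T * Omega 2 * transpose_mat (S * T) = Omega 2"
      using conj_assoc[OF Sc T Oc] TO SO by simp
    show "S * T * H * transpose_mat (S * T) = williamson_diag 2 (symp_eigs 2 G)"
      using conj_assoc[OF Sc T H] G SG by simp
  qed
qed

lemma entropy_nonneg:
  assumes "\<And>k. k < 2 \<Longrightarrow> 1 \<le> symp_eigs 2 G k"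
  shows "0 \<le> gauss_entropy 2 G"
  unfolding gauss_entropy_def using assms by (intro sum_nonneg hfun_nonneg) auto

lemma ex_G0:
  assumes s: "s*s*a = 1" and u: "u*u*e = 1" and su: "s*u = 1" and "0 < s" "0 < u"
  shows "\<exists>\<nu>. (\<forall>k<2. 0 < \<nu> k) \<and> (\<exists>S. symplectic_mat 2 S \<and> S * G0 a e * transpose_mat S = williamson_diag 2 \<nu>)"
proof (intro exI conjI)
  define S where "S = mat 4 4 (\<lambda>(i,j). if i = j then (if i = 0 \<or> i = 3 then s else u) else 0)"
  show "\<forall>k<2. 0 < (\<lambda>_. 1::real) k" by simp
  show "symplectic_mat 2 S" unfolding symplectic_mat_def
    using su by (auto simp: S_def Omega_def scalar_prod_def sum4 less4 mult.commute intro!: eq_matI)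
  show "S * G0 a e * transpose_mat S = williamson_diag 2 (\<lambda>_. 1)"
    using s u by (auto simp: S_def G0_def williamson_diag_def scalar_prod_def sum4 less4 algebra_simps intro!: eq_matI)
qed

lemma ex_G1:
  assumes s: "s*s*a = 1" and u: "u*u*e = 1" and su: "s*u = 1" and "0 < s" "0 < u"
  shows "\<exists>\<nu>. (\<forall>k<2. 0 < \<nu> k) \<and> (\<exists>S. symplectic_mat 2 S \<and> S * G1 t a e * transpose_mat S = williamson_diag 2 \<nu>)"
proof (intro exI conjI)
  define S where "S = mat 4 4 (\<lambda>(i,j).
     if i = j then (if i = 0 \<or> i = 3 then s else u)
     else if (i,j) = (0,2) then -s*t else if (i,j) = (3,1) then s*t else 0)"
  show "\<forall>k<2. 0 < (\<lambda>_. 1::real) k" by simp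
  show "symplectic_mat 2 S" unfolding symplectic_mat_def
    using su by (auto simp: S_def Omega_def scalar_prod_def sum4 less4 algebra_simps intro!: eq_matI)
  show "S * G1 t a e * transpose_mat S = williamson_diag 2 (\<lambda>_. 1)"
    using s u by (auto simp: S_def G1_def williamson_diag_def scalar_prod_def sum4 less4 algebra_simps intro!: eq_matI)
qed
theorem mainTheorem9:
  fixes t :: real
  assumes "0 \<le> t"
  shows "(INF G \<in> {G. quantum_cov 2 G}.
            ereal (mutual_info G + mutual_info (Mt t * G * transpose_mat (Mt t))))
         \<le> ereal (2 * ln (exp 1 / 2))"
proof -
  define e where "e = 1 / (20*(t+1))"
  define a where "a = 20*(t+1)"
  have e: "0 < e" and a: "0 < a" using assms by (auto simp: e_def a_def)
  have ae: "a*e = 1" using assms by (simp add: e_def a_def)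
  define s where "s = sqrt e"
  define u where "u = sqrt a"
  have ss: "s*s*a = 1" using e ae by (simp add: s_def mult.commute)
  have uu: "u*u*e = 1" using a ae by (simp add: u_def)
  have su: "s*u = 1" using ae e a by (simp add: s_def u_def real_sqrt_mult[symmetric] mult.commute)
  have s0: "0 < s" and u0: "0 < u" using e a by (auto simp: s_def u_def)
  define G where "G = G0 a e"
  have QG: "quantum_cov 2 G" unfolding G_def by (rule G0_cov[OF ae e])
  have Gc: "G \<in> carrier_mat 4 4" by (simp add: G_def G0_def)
  have G': "Mt t * G * transpose_mat (Mt t) = G1 t a e" unfolding G_def by (rule Mt_G0)
  have ent0: "0 \<le> gauss_entropy 2 G"
  proof (rule entropy_nonneg)
    fix k :: nat assume k: "k < 2"
    show "1 \<le> symp_eigs 2 G k"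
      unfolding G_def
      by (rule symp2_ge1[where T="1\<^sub>m 4", OF QG[unfolded G_def] _ _ _ ex_G0[OF ss uu su s0 u0] k])
        (use Gc in \<open>auto simp: G_def Omega_def\<close>)
  qed
  have ent1: "0 \<le> gauss_entropy 2 (G1 t a e)"
  proof (rule entropy_nonneg)
    fix k :: nat assume k: "k < 2"
    show "1 \<le> symp_eigs 2 (G1 t a e) k"
      by (rule symp2_ge1[OF QG Mt_carrier Mt_Omega G'[symmetric] ex_G1[OF ss uu su s0 u0] k])
  qed
  have hA: "gauss_entropy 1 (cov_A G) = 0"
  proof -
    have "symp_eigs 1 (cov_A G) 0 = sqrt (a*e)"
      by (rule one_mode) (use a e in \<open>auto simp: cov_A_def G_def G0_def\<close>)
    thus ?thesis using ae by (simp add: gauss_entropy_def hfun_one)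
  qed
  have hB: "gauss_entropy 1 (cov_B G) = 0"
  proof -
    have "symp_eigs 1 (cov_B G) 0 = sqrt (e*a)"
      by (rule one_mode) (use a e in \<open>auto simp: cov_B_def G_def G0_def\<close>)
    thus ?thesis using ae by (simp add: gauss_entropy_def hfun_one mult.commute)
  qed
  define \<nu> where "\<nu> = sqrt ((a + t*t*e)*e)"
  have nu2: "\<nu>*\<nu> = 1 + (t*e)^2" unfolding \<nu>_def using ae e a assms
    by (simp add: algebra_simps power2_eq_square)
  have nu1: "1 \<le> \<nu>" unfolding \<nu>_def using ae e a assms by (simp add: algebra_simps)
  have te: "(t*e)^2 \<le> 1/400"
  proof -
    define x where "x = t/(t+1)"
    have h: "t*e = x/20" using assms by (simp add: e_def x_def field_simps)
    moreover have "x \<le> 1" "0 \<le> x" using assms by (auto simp: x_def)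
    ultimately have "0 \<le> t*e" "t*e \<le> 1/20" by auto
    hence "(t*e)^2 \<le> (1/20)^2" by (intro power_mono) auto
    thus ?thesis by (simp add: power2_eq_square)
  qed
  have hnu: "hfun \<nu> \<le> 1/10" by (rule hfun_small[OF nu1 nu2 te])
  have hA': "gauss_entropy 1 (cov_A (G1 t a e)) = hfun \<nu>"
  proof -
    have "symp_eigs 1 (cov_A (G1 t a e)) 0 = sqrt ((a + t*t*e)*e)"
      by (rule one_mode) (use a e assms in \<open>auto simp: cov_A_def G1_def intro: add_pos_nonneg\<close>)
    thus ?thesis by (simp add: gauss_entropy_def \<nu>_def)
  qed
  have hB': "gauss_entropy 1 (cov_B (G1 t a e)) = hfun \<nu>"
  proof -
    have "symp_eigs 1 (cov_B (G1 t a e)) 0 = sqrt (e*(a + t*t*e))"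
      by (rule one_mode) (use a e assms in \<open>auto simp: cov_B_def G1_def intro: add_pos_nonneg\<close>)
    thus ?thesis by (simp add: gauss_entropy_def \<nu>_def mult.commute)
  qed
  have val: "mutual_info G + mutual_info (Mt t * G * transpose_mat (Mt t)) \<le> 2 * ln (exp 1 / 2)"
  proof -
    have "mutual_info G + mutual_info (Mt t * G * transpose_mat (Mt t)) \<le> 2/10"
      unfolding G' mutual_info_def hA hB hA' hB' using ent0 ent1 hnu by linarith
    also have "\<dots> \<le> 2 * ln (exp 1 / 2)" using ln2_le by (simp add: ln_div)
    finally show ?thesis .
  qed
  have "(INF G \<in> {G. quantum_cov 2 G}.
            ereal (mutual_info G + mutual_info (Mt t * G * transpose_mat (Mt t))))
        \<le> ereal (mutual_info G + mutual_info (Mt t * G * transpose_mat (Mt t)))"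
    by (rule INF_lower) (simp add: QG)
  also have "\<dots> \<le> ereal (2 * ln (exp 1 / 2))" using val by simp
  finally show ?thesis .
qed
end
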